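(* Let $p=f+\varepsilon g\in\mathbb{D}[t]$ ($f,g\in\mathbb{R}[t]$) be monic, and write $f=\prod_{i=1}^m N_i^{n_i}$ where $N_1,\dots,N_m\in\mathbb{R}[t]$ are pairwise coprime irreducible monic polynomials and $n_1,\dots,n_m$ are positive integers. Then $p$ can be written as a product of monic polynomials in $\mathbb{D}[t]$ each of whose primal parts is irreducible over $\mathbb{R}$ if and only if $\prod_{i=1}^m N_i^{n_i-1}$ divides $g$ in $\mathbb{R}[t]$.
   Context: $\mathbb{D}=\mathbb{R}[\varepsilon]/\langle\varepsilon^2\rangle$ denotes the dual numbers; every element of $\mathbb{D}[t]$ is uniquely $f+\varepsilon g$ with $f,g\in\mathbb{R}[t]$, where $f$ is called the primal part. A polynomial in $\mathbb{D}[t]$ is monic if its leading coefficient is $1$ (so $p=f+\varepsilon g$ monic means $f$ monic and $\deg g<\deg f$). *)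

theory Defs
  imports "HOL-Computational_Algebra.Polynomial_Factorial"
begin

text \<open>Dual-number polynomials D[t], D = R[eps]/(eps^2), represented as pairs (f, g)
  standing for f + eps g, with f, g real polynomials (f is the primal part).\<close>

type_synonym dpoly = "real poly \<times> real poly"

definition dmult :: "dpoly \<Rightarrow> dpoly \<Rightarrow> dpoly" where
  "dmult p q = (fst p * fst q, fst p * snd q + snd p * fst q)"

definition dpoly_one :: dpoly where
  "dpoly_one = (1, 0)"

fun dprod :: "dpoly list \<Rightarrow> dpoly" where
  "dprod [] = dpoly_one"
| "dprod (q # qs) = dmult q (dprod qs)"

definition dmonic :: "dpoly \<Rightarrow> bool" where
  "dmonic p = (let d = max (degree (fst p)) (degree (snd p))
               in coeff (fst p) d = 1 \<and> coeff (snd p) d = 0)"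

end

theory Submission
  imports Defs "HOL-Computational_Algebra.Field_as_Ring"
begin

lemma dmonic_deg:
  assumes "dmonic (f, g)" shows "g = 0 \<or> degree g < degree f"
proof (rule ccontr)
  assume "\<not> (g = 0 \<or> degree g < degree f)"
  hence "g \<noteq> 0" "degree f \<le> degree g" by auto
  hence "max (degree f) (degree g) = degree g" by simp
  with assms have "coeff g (degree g) = 0" by (simp add: dmonic_def Let_def)
  with \<open>g \<noteq> 0\<close> show False by simp
qed

lemma dprod_fst: "fst (dprod qs) = prod_list (map fst qs)"
  by (induction qs) (auto simp: dmult_def dpoly_one_def)

lemma dprod_dvd:
  assumes "\<forall>q\<in>set qs. fst q dvd D"
  shows "fst (dprod qs) dvd snd (dprod qs) * D"
  using assms
proof (induction qs)
  case Nil
  then show ?case by (simp add: dpoly_one_def)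
next
  case (Cons q qs)
  obtain a b where q: "q = (a, b)" by force
  obtain F G where p: "dprod qs = (F, G)" by force
  from Cons have IH: "F dvd G * D" using p by auto
  from Cons have aD: "a dvd D" using q by auto
  have "a * F dvd a * G * D" using IH by (simp add: mult.assoc)
  moreover have "a * F dvd b * F * D" using aD
    by (metis dvd_mult_right mult.commute mult_dvd_mono dvd_refl mult.left_commute)
  ultimately have "a * F dvd (a * G + b * F) * D"
    by (simp add: distrib_right)
  then show ?case using q p by (simp add: dmult_def)
qed

lemma prime_dvd_prod_set:
  assumes "finite A" "prime_elem p" "p dvd prod F A"
  shows "\<exists>a\<in>A. p dvd F a"
  using assms
proof (induction A rule: finite_induct)
  case empty
  then show ?case using prime_elem_not_unit by auto
next
  case (insert x A)
  then show ?case by (auto simp: prime_elem_dvd_mult_iff)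
qed

lemma coprime_prod_dvd:
  assumes "finite I" "\<And>i j. i \<in> I \<Longrightarrow> j \<in> I \<Longrightarrow> i \<noteq> j \<Longrightarrow> coprime (N i) (N j)"
    "\<And>k. k \<in> I \<Longrightarrow> (N k :: real poly) dvd X"
  shows "prod N I dvd X"
  using assms
proof (induction I rule: finite_induct)
  case empty
  then show ?case by simp
next
  case (insert x A)
  have "coprime (N x) (prod N A)"
    using insert by (intro prod_coprime_right) auto
  then show ?case using insert by (simp add: divides_mult)
qed

lemma dmult_assoc: "dmult (dmult p q) s = dmult p (dmult q s)"
  by (simp add: dmult_def algebra_simps)

lemma dprod_append: "dprod (xs @ ys) = dmult (dprod xs) (dprod ys)"
  by (induction xs) (auto simp: dmult_def dpoly_one_def algebra_simps)

lemma dprod_block: "dprod ((a, r) # replicate k (a, 0)) = (a ^ (k+1), r * a ^ k)"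
proof -
  have "dprod (replicate k (a, 0)) = (a ^ k, 0)"
    by (induction k) (auto simp: dmult_def dpoly_one_def)
  then show ?thesis by (simp add: dmult_def)
qed

lemma dprod_blocks:
  "dprod (concat (map (\<lambda>i. (A i, B i) # replicate (k i) (A i, 0)) [1..<Suc m])) =
    ((\<Prod>i\<in>{1..m}. A i ^ (k i + 1)),
     (\<Sum>i\<in>{1..m}. B i * A i ^ k i * (\<Prod>j\<in>{1..m}-{i}. A j ^ (k j + 1))))"
proof (induction m)
  case 0
  then show ?case by (simp add: dpoly_one_def)
next
  case (Suc m)
  let ?P = "\<lambda>j. A j ^ (k j + 1)"
  have split: "[1..<Suc (Suc m)] = [1..<Suc m] @ [Suc m]" by simp
  have S: "{1..Suc m} = insert (Suc m) {1..m}" by auto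
  have rem: "\<And>i. i \<in> {1..m} \<Longrightarrow> {1..Suc m} - {i} = insert (Suc m) ({1..m} - {i})" by auto
  have rem2: "{1..Suc m} - {Suc m} = {1..m}" by auto
  have sumeq: "(\<Sum>i\<in>{1..m}. B i * A i ^ k i * (\<Prod>j\<in>{1..Suc m}-{i}. ?P j)) =
     (\<Sum>i\<in>{1..m}. B i * A i ^ k i * (\<Prod>j\<in>{1..m}-{i}. ?P j)) * ?P (Suc m)"
    unfolding sum_distrib_right
  proof (rule sum.cong)
    fix i assume i: "i \<in> {1..m}"
    have "(\<Prod>j\<in>{1..Suc m}-{i}. ?P j) = ?P (Suc m) * (\<Prod>j\<in>{1..m}-{i}. ?P j)"
      using i by (simp only: rem[OF i]) (simp add: prod.insert)
    then show "B i * A i ^ k i * (\<Prod>j\<in>{1..Suc m}-{i}. ?P j) =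
      B i * A i ^ k i * (\<Prod>j\<in>{1..m}-{i}. ?P j) * ?P (Suc m)" by simp
  qed simp
  have "dprod (concat (map (\<lambda>i. (A i, B i) # replicate (k i) (A i, 0)) [1..<Suc (Suc m)]))
     = dmult (dprod (concat (map (\<lambda>i. (A i, B i) # replicate (k i) (A i, 0)) [1..<Suc m])))
         (dprod ((A (Suc m), B (Suc m)) # replicate (k (Suc m)) (A (Suc m), 0)))"
    by (simp only: split map_append concat_append dprod_append) simp
  also have "\<dots> = dmult ((\<Prod>i\<in>{1..m}. ?P i),
     (\<Sum>i\<in>{1..m}. B i * A i ^ k i * (\<Prod>j\<in>{1..m}-{i}. ?P j)))
     (?P (Suc m), B (Suc m) * A (Suc m) ^ k (Suc m))"
    by (simp only: Suc.IH dprod_block)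
  finally have eq: "dprod (concat (map (\<lambda>i. (A i, B i) # replicate (k i) (A i, 0)) [1..<Suc (Suc m)]))
     = ((\<Prod>i\<in>{1..m}. ?P i) * ?P (Suc m),
        (\<Prod>i\<in>{1..m}. ?P i) * (B (Suc m) * A (Suc m) ^ k (Suc m)) +
        (\<Sum>i\<in>{1..m}. B i * A i ^ k i * (\<Prod>j\<in>{1..m}-{i}. ?P j)) * ?P (Suc m))"
    by (simp add: dmult_def)
  have sS: "\<And>F::nat \<Rightarrow> real poly. sum F {1..Suc m} = sum F {1..m} + F (Suc m)"
    by (simp add: S add.commute)
  have pS: "\<And>F::nat \<Rightarrow> real poly. prod F {1..Suc m} = prod F {1..m} * F (Suc m)"
    by (simp add: S mult.commute)
  show ?case
    unfolding eq sS pS rem2 sumeq by (simp add: algebra_simps)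
qed

lemma dvd_prod_list_mem: "(x::real poly) \<in> set xs \<Longrightarrow> x dvd prod_list xs"
  by (induction xs) (auto simp: dvd_mult)

lemma dmonic_intro:
  assumes "lead_coeff a = 1" "c = 0 \<or> degree c < degree a"
  shows "dmonic (a, c)"
proof -
  have "max (degree a) (degree c) = degree a" using assms(2) by auto
  moreover have "coeff c (degree a) = 0" using assms(2) by (auto intro: coeff_eq_0)
  ultimately show ?thesis using assms(1) by (simp add: dmonic_def Let_def)
qed

definition smallp :: "nat \<Rightarrow> real poly \<Rightarrow> bool" where
  "smallp d p \<longleftrightarrow> p = 0 \<or> degree p < d"

lemma smallp_add: "smallp d p \<Longrightarrow> smallp d q \<Longrightarrow> smallp d (p + q)"
  unfolding smallp_def using degree_add_le_max[of p q]
  by (metis add.left_neutral add.right_neutral le_less_trans max_less_iff_conj)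

lemma smallp_diff: "smallp d p \<Longrightarrow> smallp d q \<Longrightarrow> smallp d (p - q)"
  unfolding smallp_def using degree_diff_le_max[of p q]
  by (metis diff_zero le_less_trans max_less_iff_conj minus_diff_eq diff_self degree_minus)

lemma smallp_sum: "finite A \<Longrightarrow> (\<And>i. i \<in> A \<Longrightarrow> smallp d (F i)) \<Longrightarrow> smallp d (sum F A)"
  by (induction A rule: finite_induct) (auto simp: smallp_add, simp add: smallp_def)

theorem lemma4:
  fixes f g :: "real poly" and N :: "nat \<Rightarrow> real poly" and n :: "nat \<Rightarrow> nat" and m :: nat
  assumes "dmonic (f, g)"
    and "\<And>i. i \<in> {1..m} \<Longrightarrow> irreducible (N i)"
    and "\<And>i. i \<in> {1..m} \<Longrightarrow> lead_coeff (N i) = 1"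
    and "\<And>i. i \<in> {1..m} \<Longrightarrow> n i > 0"
    and "\<And>i j. i \<in> {1..m} \<Longrightarrow> j \<in> {1..m} \<Longrightarrow> i \<noteq> j \<Longrightarrow> coprime (N i) (N j)"
    and "f = (\<Prod>i=1..m. N i ^ n i)"
  shows "(\<exists>qs. (\<forall>q\<in>set qs. dmonic q \<and> irreducible (fst q)) \<and> dprod qs = (f, g))
         \<longleftrightarrow> (\<Prod>i=1..m. N i ^ (n i - 1)) dvd g"
  proof -
  define rad where "rad = (\<Prod>i\<in>{1..m}. N i)"
  define R where "R = (\<Prod>i\<in>{1..m}. N i ^ (n i - 1))"
  have Nnz: "\<And>i. i \<in> {1..m} \<Longrightarrow> N i \<noteq> 0" using assms(2) by (auto simp: irreducible_def)
  have radnz: "rad \<noteq> 0" unfolding rad_def using Nnz by simp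
  have Rnz: "R \<noteq> 0" unfolding R_def using Nnz by simp
  have fR: "f = R * rad"
    unfolding assms(6) R_def rad_def prod.distrib[symmetric]
    by (rule prod.cong) (use assms(4) in \<open>auto intro: power_minus_mult[symmetric] simp del: One_nat_def\<close>)
  show ?thesis
  proof
    assume "\<exists>qs. (\<forall>q\<in>set qs. dmonic q \<and> irreducible (fst q)) \<and> dprod qs = (f, g)"
    then obtain qs where qs: "\<forall>q\<in>set qs. dmonic q \<and> irreducible (fst q)" "dprod qs = (f, g)"
      by blast
    have "\<forall>q\<in>set qs. fst q dvd rad"
    proof
      fix q assume q: "q \<in> set qs"
      have pe: "prime_elem (fst q)" using qs q prime_elem_iff_irreducible by blast
      have "fst q dvd prod_list (map fst qs)" using q by (intro dvd_prod_list_mem) auto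
      then have "fst q dvd f" using dprod_fst[of qs] qs by simp
      then obtain i where i: "i \<in> {1..m}" "fst q dvd N i ^ n i"
        using prime_dvd_prod_set[OF _ pe, of "{1..m}" "\<lambda>i. N i ^ n i"] assms(6) by auto
      hence "fst q dvd N i" using prime_elem_dvd_power pe by blast
      then show "fst q dvd rad" unfolding rad_def using i dvd_prodI dvd_trans
        by (metis finite_atLeastAtMost)
    qed
    hence "fst (dprod qs) dvd snd (dprod qs) * rad" by (rule dprod_dvd)
    hence "R * rad dvd g * rad" using qs fR by simp
    thus "(\<Prod>i=1..m. N i ^ (n i - 1)) dvd g" using radnz by (simp add: R_def)
  next
    assume "(\<Prod>i=1..m. N i ^ (n i - 1)) dvd g"
    then obtain h where gh: "g = R * h" unfolding R_def by blast
    have hdeg: "smallp (degree rad) h"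
    proof (cases "h = 0")
      case True then show ?thesis by (simp add: smallp_def)
    next
      case False
      hence "g \<noteq> 0" using gh Rnz by simp
      hence "degree g < degree f" using dmonic_deg[OF assms(1)] by simp
      hence "degree R + degree h < degree R + degree rad"
        using gh fR False Rnz radnz by (simp add: degree_mult_eq)
      then show ?thesis by (simp add: smallp_def)
    qed
    define P where "P i = (\<Prod>j\<in>{1..m}-{i}. N j)" for i
    have radP: "\<And>i. i \<in> {1..m} \<Longrightarrow> rad = N i * P i"
      unfolding rad_def P_def by (simp add: prod.remove)
    have Pnz: "\<And>i. P i \<noteq> 0" unfolding P_def using Nnz by simp
    have cop: "\<And>i. i \<in> {1..m} \<Longrightarrow> coprime (N i) (P i)"
      unfolding P_def by (intro prod_coprime_right) (use assms(5) in auto)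
    define b where "b i = snd (bezout_coefficients (N i) (P i))" for i
    have bez: "\<And>i. i \<in> {1..m} \<Longrightarrow> N i dvd b i * P i - 1"
    proof -
      fix i assume i: "i \<in> {1..m}"
      have "fst (bezout_coefficients (N i) (P i)) * N i + b i * P i = 1"
        unfolding b_def using cop[OF i] by (simp add: bezout_coefficients_fst_snd)
      hence "b i * P i - 1 = - (fst (bezout_coefficients (N i) (P i)) * N i)"
        by (simp add: algebra_simps)
      then show "N i dvd b i * P i - 1" by simp
    qed
    define r where "r i = (h * b i) mod N i" for i
    define X where "X = h - (\<Sum>i\<in>{1..m}. r i * P i)"
    have NX: "N k dvd X" if k: "k \<in> {1..m}" for k
    proof -
      have A: "N k dvd (\<Sum>i\<in>{1..m}-{k}. r i * P i)"
      proof (rule dvd_sum)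
        fix i assume "i \<in> {1..m}-{k}"
        hence "k \<in> {1..m}-{i}" using k by auto
        hence "N k dvd P i" unfolding P_def by (intro dvd_prodI) auto
        then show "N k dvd r i * P i" by simp
      qed
      have req: "r k = h * b k - (h * b k div N k) * N k"
        unfolding r_def by (simp add: minus_div_mult_eq_mod)
      have "h - r k * P k = (h * b k div N k) * N k * P k - h * (b k * P k - 1)"
        unfolding req by (simp add: algebra_simps)
      moreover have "N k dvd (h * b k div N k) * N k * P k" by simp
      moreover have "N k dvd h * (b k * P k - 1)" using bez[OF k] by simp
      ultimately have B: "N k dvd h - r k * P k" by (simp add: dvd_diff)
      have "X = (h - r k * P k) - (\<Sum>i\<in>{1..m}-{k}. r i * P i)"
        unfolding X_def using k by (simp add: sum.remove)
      then show ?thesis using A B by (simp add: dvd_diff)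
    qed
    have "rad dvd X" unfolding rad_def
      by (rule coprime_prod_dvd) (use assms(5) NX in auto)
    then obtain Q where XQ: "X = rad * Q" by blast
    have Xs: "smallp (degree rad) X"
      unfolding X_def
    proof (intro smallp_diff hdeg smallp_sum)
      fix i assume i: "i \<in> {1..m}"
      have "r i = 0 \<or> degree (r i) < degree (N i)"
        unfolding r_def using degree_mod_less Nnz[OF i] by blast
      then show "smallp (degree rad) (r i * P i)"
      proof (cases "r i = 0")
        case True then show ?thesis by (simp add: smallp_def)
      next
        case False
        with \<open>r i = 0 \<or> degree (r i) < degree (N i)\<close>
        have d: "degree (r i) < degree (N i)" by simp
        have "degree (r i * P i) = degree (r i) + degree (P i)"
          using Pnz False by (simp add: degree_mult_eq)
        also have "\<dots> < degree (N i) + degree (P i)" using d by simp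
        also have "\<dots> = degree rad" using radP[OF i] Nnz[OF i] Pnz by (simp add: degree_mult_eq)
        finally show ?thesis by (simp add: smallp_def)
      qed
    qed simp
    have "X = 0"
    proof (rule ccontr)
      assume "X \<noteq> 0"
      hence "Q \<noteq> 0" using XQ by auto
      hence "degree X = degree rad + degree Q" using XQ radnz by (simp add: degree_mult_eq)
      with Xs \<open>X \<noteq> 0\<close> show False by (simp add: smallp_def)
    qed
    hence hsum: "h = (\<Sum>i\<in>{1..m}. r i * P i)" unfolding X_def by simp
    define qs where "qs = concat (map (\<lambda>i. (N i, r i) # replicate (n i - 1) (N i, 0)) [1..<Suc m])"
    have pw: "\<And>j. j \<in> {1..m} \<Longrightarrow> N j ^ (n j - 1 + 1) = N j ^ n j"
      using assms(4) by simp
    have dq: "dprod qs = ((\<Prod>i\<in>{1..m}. N i ^ n i),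
       (\<Sum>i\<in>{1..m}. r i * N i ^ (n i - 1) * (\<Prod>j\<in>{1..m}-{i}. N j ^ n j)))"
    proof -
      have e1: "(\<Prod>i\<in>{1..m}. N i ^ (n i - 1 + 1)) = (\<Prod>i\<in>{1..m}. N i ^ n i)"
        by (rule prod.cong[OF refl]) (metis pw)
      have e2: "(\<Sum>i\<in>{1..m}. r i * N i ^ (n i - 1) * (\<Prod>j\<in>{1..m}-{i}. N j ^ (n j - 1 + 1)))
          = (\<Sum>i\<in>{1..m}. r i * N i ^ (n i - 1) * (\<Prod>j\<in>{1..m}-{i}. N j ^ n j))"
      proof (rule sum.cong[OF refl])
        fix i assume "i \<in> {1..m}"
        have "(\<Prod>j\<in>{1..m}-{i}. N j ^ (n j - 1 + 1)) = (\<Prod>j\<in>{1..m}-{i}. N j ^ n j)"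
          by (rule prod.cong[OF refl]) (metis DiffD1 pw)
        then show "r i * N i ^ (n i - 1) * (\<Prod>j\<in>{1..m}-{i}. N j ^ (n j - 1 + 1)) =
          r i * N i ^ (n i - 1) * (\<Prod>j\<in>{1..m}-{i}. N j ^ n j)" by simp
      qed
      show ?thesis unfolding qs_def dprod_blocks e1 e2 ..
    qed
    have RP: "R * P i = N i ^ (n i - 1) * (\<Prod>j\<in>{1..m}-{i}. N j ^ n j)" if i: "i \<in> {1..m}" for i
    proof -
      have "R = N i ^ (n i - 1) * (\<Prod>j\<in>{1..m}-{i}. N j ^ (n j - 1))"
        unfolding R_def using i by (simp add: prod.remove)
      moreover have "(\<Prod>j\<in>{1..m}-{i}. N j ^ (n j - 1)) * P i = (\<Prod>j\<in>{1..m}-{i}. N j ^ n j)"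
        unfolding P_def prod.distrib[symmetric]
        by (rule prod.cong[OF refl]) (metis DiffD1 assms(4) power_minus_mult)
      ultimately show ?thesis by (simp add: mult.assoc)
    qed
    have geq: "g = (\<Sum>i\<in>{1..m}. r i * N i ^ (n i - 1) * (\<Prod>j\<in>{1..m}-{i}. N j ^ n j))"
      unfolding gh hsum sum_distrib_left
    proof (rule sum.cong)
      fix i assume "i \<in> {1..m}"
      then show "R * (r i * P i) = r i * N i ^ (n i - 1) * (\<Prod>j\<in>{1..m}-{i}. N j ^ n j)"
        using RP by (metis mult.assoc mult.left_commute)
    qed simp
    have mem: "\<forall>q\<in>set qs. dmonic q \<and> irreducible (fst q)"
    proof
      fix q assume "q \<in> set qs"
      hence "q \<in> (\<Union>i\<in>{1..m}. {(N i, r i), (N i, 0)})"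
        unfolding qs_def by (auto split: if_splits)
      then obtain i where i: "i \<in> {1..m}" and q: "q = (N i, r i) \<or> q = (N i, 0)"
        by blast
      have "r i = 0 \<or> degree (r i) < degree (N i)"
        unfolding r_def using degree_mod_less Nnz[OF i] by blast
      then show "dmonic q \<and> irreducible (fst q)"
        using q assms(2,3)[OF i] dmonic_intro by auto
    qed
    show "\<exists>qs. (\<forall>q\<in>set qs. dmonic q \<and> irreducible (fst q)) \<and> dprod qs = (f, g)"
      using mem dq geq assms(6) by auto
  qed
qed

end
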